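(* Let $0<\alpha<1$, $\gamma>0$, and let $h$ be a real normalised probability density on $(0,\infty)$ satisfying $$h(x)=\frac{\gamma}{x}\int_0^x\frac{h(u)}{(x-\alpha u)^{\gamma}}\,du,\qquad x\in(0,\infty).$$ Then $h$ is positive and for all $0<x<\infty$, $$\gamma x^{-\gamma-1}\exp\!\left[-(1-\alpha)^{-\gamma}x^{-\gamma}\right]\le h(x)\le \gamma(1-\alpha)^{-\gamma}x^{-\gamma-1}\exp\!\left[-x^{-\gamma}\right].$$ *)

theory Defs
  imports "HOL-Analysis.Analysis"
begin

end

theory Submission
  imports Defs
begin

locale Hloc =
  fixes h :: "real \<Rightarrow> real" and \<alpha> \<gamma> :: real
  assumes alpha: "0 < \<alpha>" "\<alpha> < 1"
    and gamma: "0 < \<gamma>"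
    and nonneg: "\<And>x. 0 < x \<Longrightarrow> 0 \<le> h x"
    and integrable: "set_integrable lborel {0<..} h"
    and normalised: "(LINT x:{0<..}|lborel. h x) = 1"
    and eqn: "\<And>x. 0 < x \<Longrightarrow>
       h x = \<gamma> / x * (LINT u:{0<..<x}|lborel. h u / (x - \<alpha> * u) powr \<gamma>)"
begin

definition "h0 u = indicator {0<..} u * h u"

lemma h0_meas[measurable]: "h0 \<in> borel_measurable lborel"
  using integrable unfolding set_integrable_def h0_def
  by (simp add: borel_measurable_integrable)

lemma h0_int: "integrable lborel h0"
  using integrable unfolding set_integrable_def h0_def by simp

lemma h0_nonneg: "0 \<le> h0 u"
  using nonneg by (simp add: h0_def indicator_def)

lemma kern_meas: "(\<lambda>u. indicator {0<..<x} u * (h0 u / (x - \<alpha>*u) powr \<gamma>)) \<in> borel_measurable lborel"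
  by measurable

lemma kern_bound:
  assumes "0 < a" "a \<le> x" "0 < u" "u < x"
  shows "1 / (x - \<alpha>*u) powr \<gamma> \<le> 1 / ((1-\<alpha>)*a) powr \<gamma>"
proof -
  have "(1-\<alpha>)*a \<le> (1-\<alpha>)*x" using assms alpha by (intro mult_left_mono) auto
  moreover have "\<alpha>*u \<le> \<alpha>*x" using assms alpha by (intro mult_left_mono) auto
  ultimately have "(1-\<alpha>)*a \<le> x - \<alpha>*u" by (simp add: algebra_simps)
  moreover have "0 < (1-\<alpha>)*a" using assms alpha by simp
  ultimately have "((1-\<alpha>)*a) powr \<gamma> \<le> (x - \<alpha>*u) powr \<gamma>"
    using gamma by (intro powr_mono2) auto
  moreover have "0 < ((1-\<alpha>)*a) powr \<gamma>" using alpha assms by simp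
  ultimately show ?thesis by (simp add: frac_le)
qed

lemma kern_int:
  assumes "0 < x"
  shows "integrable lborel (\<lambda>u. indicator {0<..<x} u * (h0 u / (x - \<alpha>*u) powr \<gamma>))"
proof (rule Bochner_Integration.integrable_bound[OF integrable_mult_right[OF h0_int, of "1 / ((1-\<alpha>)*x) powr \<gamma>"] kern_meas])
  show "AE u in lborel. norm (indicator {0<..<x} u * (h0 u / (x - \<alpha> * u) powr \<gamma>))
          \<le> norm (1 / ((1 - \<alpha>) * x) powr \<gamma> * h0 u)"
  proof (rule AE_I2)
    fix u
    show "norm (indicator {0<..<x} u * (h0 u / (x - \<alpha> * u) powr \<gamma>))
          \<le> norm (1 / ((1 - \<alpha>) * x) powr \<gamma> * h0 u)"
    proof (cases "u \<in> {0<..<x}")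
      case True
      then have "1 / (x - \<alpha>*u) powr \<gamma> \<le> 1 / ((1-\<alpha>)*x) powr \<gamma>"
        using kern_bound[of x x u] assms by auto
      with h0_nonneg[of u] have "h0 u / (x - \<alpha>*u) powr \<gamma> \<le> 1 / ((1-\<alpha>)*x) powr \<gamma> * h0 u"
        by (metis mult.commute mult_left_mono times_divide_eq_right mult.right_neutral)
      then show ?thesis using True h0_nonneg[of u] by auto
    qed auto
  qed
qed

definition "J x = integral\<^sup>L lborel (\<lambda>u. indicator {0<..<x} u * (h0 u / (x - \<alpha>*u) powr \<gamma>))"
definition "H x = integral\<^sup>L lborel (\<lambda>u. indicator {0<..<x} u * h0 u)"

lemma J_eq: "(LINT u:{0<..<x}|lborel. h u / (x - \<alpha> * u) powr \<gamma>) = J x"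
  unfolding set_lebesgue_integral_def J_def
  by (intro Bochner_Integration.integral_cong) (auto simp: h0_def indicator_def)

lemma H_int: "integrable lborel (\<lambda>u. indicator {0<..<x} u * h0 u)"
  using integrable_mult_indicator[of "{0<..<x}" lborel h0] h0_int by simp

lemma J_bounds:
  assumes "0 < x"
  shows "x powr (-\<gamma>) * H x \<le> J x" "J x \<le> (1-\<alpha>) powr (-\<gamma>) * x powr (-\<gamma>) * H x"
proof -
  have "x powr (-\<gamma>) * H x = integral\<^sup>L lborel (\<lambda>u. x powr (-\<gamma>) * (indicator {0<..<x} u * h0 u))"
    unfolding H_def by simp
  also have "\<dots> \<le> J x" unfolding J_def
  proof (rule integral_mono)
    show "integrable lborel (\<lambda>u. x powr (-\<gamma>) * (indicator {0<..<x} u * h0 u))"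
      using H_int by simp
    show "integrable lborel (\<lambda>u. indicator {0<..<x} u * (h0 u / (x - \<alpha>*u) powr \<gamma>))"
      using kern_int assms by simp
    fix u
    show "x powr (-\<gamma>) * (indicator {0<..<x} u * h0 u) \<le> indicator {0<..<x} u * (h0 u / (x - \<alpha>*u) powr \<gamma>)"
    proof (cases "u \<in> {0<..<x}")
      case True
      then have "x - \<alpha>*u \<le> x" "0 < x - \<alpha>*u" using alpha
        by (auto simp: mult_pos_pos) (smt (verit) mult_left_le_one_le mult_le_cancel_right1)
      then have "(x - \<alpha>*u) powr \<gamma> \<le> x powr \<gamma>" using gamma by (intro powr_mono2) auto
      then have "1 / x powr \<gamma> \<le> 1 / (x - \<alpha>*u) powr \<gamma>"
        using \<open>0 < x - \<alpha>*u\<close> by (intro divide_left_mono) (auto intro!: mult_pos_pos)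
      then have "x powr (-\<gamma>) * h0 u \<le> 1 / (x - \<alpha>*u) powr \<gamma> * h0 u"
        using h0_nonneg[of u] mult_right_mono[of "1 / x powr \<gamma>" "1 / (x - \<alpha>*u) powr \<gamma>" "h0 u"]
        by (simp add: powr_minus_divide)
      then show ?thesis using True by simp
    qed auto
  qed
  finally show "x powr (-\<gamma>) * H x \<le> J x" .
  have "J x \<le> integral\<^sup>L lborel (\<lambda>u. (1-\<alpha>) powr (-\<gamma>) * x powr (-\<gamma>) * (indicator {0<..<x} u * h0 u))"
    unfolding J_def
  proof (rule integral_mono)
    show "integrable lborel (\<lambda>u. (1-\<alpha>) powr (-\<gamma>) * x powr (-\<gamma>) * (indicator {0<..<x} u * h0 u))"
      using H_int by simp
    show "integrable lborel (\<lambda>u. indicator {0<..<x} u * (h0 u / (x - \<alpha>*u) powr \<gamma>))"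
      using kern_int assms by simp
    fix u
    show "indicator {0<..<x} u * (h0 u / (x - \<alpha>*u) powr \<gamma>) \<le> (1-\<alpha>) powr (-\<gamma>) * x powr (-\<gamma>) * (indicator {0<..<x} u * h0 u)"
    proof (cases "u \<in> {0<..<x}")
      case True
      then have "1 / (x - \<alpha>*u) powr \<gamma> \<le> 1 / ((1-\<alpha>)*x) powr \<gamma>"
        using kern_bound[of x x u] assms by auto
      also have "1 / ((1-\<alpha>)*x) powr \<gamma> = (1-\<alpha>) powr (-\<gamma>) * x powr (-\<gamma>)"
        using alpha assms by (simp add: powr_mult powr_minus_divide)
      finally have "h0 u * (1 / (x - \<alpha>*u) powr \<gamma>) \<le> h0 u * ((1-\<alpha>) powr (-\<gamma>) * x powr (-\<gamma>))"
        using h0_nonneg[of u] by (intro mult_left_mono) auto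
      then show ?thesis using True by (simp add: mult_ac)
    qed auto
  qed
  also have "\<dots> = (1-\<alpha>) powr (-\<gamma>) * x powr (-\<gamma>) * H x"
    unfolding H_def by simp
  finally show "J x \<le> (1-\<alpha>) powr (-\<gamma>) * x powr (-\<gamma>) * H x" .
qed

lemma J_cont:
  assumes "0 < a"
  shows "continuous_on {a..b} J"
proof (rule continuous_on_sequentiallyI)
  fix X :: "nat \<Rightarrow> real" and x0
  assume X: "\<forall>n. X n \<in> {a..b}" and x0: "x0 \<in> {a..b}" and lim: "X \<longlonglongrightarrow> x0"
  define K where "K = 1 / ((1-\<alpha>)*a) powr \<gamma>"
  show "(\<lambda>n. J (X n)) \<longlonglongrightarrow> J x0"
    unfolding J_def
  proof (rule integral_dominated_convergence[where w="\<lambda>u. K * h0 u"])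
    show "(\<lambda>u. indicator {0<..<x0} u * (h0 u / (x0 - \<alpha>*u) powr \<gamma>)) \<in> borel_measurable lborel"
      by (rule kern_meas)
    show "\<And>n. (\<lambda>u. indicator {0<..<X n} u * (h0 u / (X n - \<alpha>*u) powr \<gamma>)) \<in> borel_measurable lborel"
      by (rule kern_meas)
    show "integrable lborel (\<lambda>u. K * h0 u)" using h0_int by simp
    show "AE u in lborel. (\<lambda>n. indicator {0<..<X n} u * (h0 u / (X n - \<alpha>*u) powr \<gamma>))
            \<longlonglongrightarrow> indicator {0<..<x0} u * (h0 u / (x0 - \<alpha>*u) powr \<gamma>)"
      using AE_lborel_singleton[of x0]
    proof eventually_elim
      case (elim u)
      show ?case
      proof (cases "u \<le> 0")
        case True
        then show ?thesis by simp
      next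
        case False
        show ?thesis
        proof (cases "u < x0")
          case True
          have ev: "eventually (\<lambda>n. u < X n) sequentially"
            using order_tendstoD(1)[OF lim True] .
          have "(\<lambda>n. h0 u / (X n - \<alpha>*u) powr \<gamma>) \<longlonglongrightarrow> h0 u / (x0 - \<alpha>*u) powr \<gamma>"
          proof -
            have "\<alpha>*u < u" using alpha False by simp
            then have ne: "x0 - \<alpha>*u \<noteq> 0" using True by simp
            then have "(x0 - \<alpha>*u) powr \<gamma> \<noteq> 0" by simp
            then show ?thesis
              by (intro tendsto_divide tendsto_const tendsto_powr tendsto_diff lim ne)
          qed
          then have "(\<lambda>n. indicator {0<..<X n} u * (h0 u / (X n - \<alpha>*u) powr \<gamma>)) \<longlonglongrightarrow> h0 u / (x0 - \<alpha>*u) powr \<gamma>"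
            by (rule Lim_transform_eventually)
               (use ev False True in \<open>auto elim!: eventually_mono\<close>)
          then show ?thesis using True False by simp
        next
          case False2: False
          then have "x0 < u" using elim by simp
          have ev: "eventually (\<lambda>n. X n < u) sequentially"
            using order_tendstoD(2)[OF lim \<open>x0 < u\<close>] .
          have "(\<lambda>n. indicator {0<..<X n} u * (h0 u / (X n - \<alpha>*u) powr \<gamma>)) \<longlonglongrightarrow> 0"
            by (rule Lim_transform_eventually[OF tendsto_const])
               (use ev False False2 in \<open>auto elim!: eventually_mono\<close>)
          then show ?thesis using False2 by simp
        qed
      qed
    qed
    fix n
    show "AE u in lborel. norm (indicator {0<..<X n} u * (h0 u / (X n - \<alpha>*u) powr \<gamma>)) \<le> K * h0 u"
    proof (rule AE_I2)
      fix u
      show "norm (indicator {0<..<X n} u * (h0 u / (X n - \<alpha>*u) powr \<gamma>)) \<le> K * h0 u"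
      proof (cases "u \<in> {0<..<X n}")
        case True
        then have "1 / (X n - \<alpha>*u) powr \<gamma> \<le> K"
          unfolding K_def using kern_bound[of a "X n" u] assms X by auto
        with h0_nonneg[of u] have "h0 u / (X n - \<alpha>*u) powr \<gamma> \<le> K * h0 u"
          by (metis mult.commute mult_left_mono times_divide_eq_right mult.right_neutral)
        then show ?thesis using True h0_nonneg[of u] by auto
      next
        case False
        have "0 \<le> K" unfolding K_def by simp
        then show ?thesis using False h0_nonneg[of u] by auto
      qed
    qed
  qed
qed

lemma h_eq: "0 < x \<Longrightarrow> h x = \<gamma> / x * J x"
  using eqn J_eq by simp

lemma h_cont:
  assumes "0 < a"
  shows "continuous_on {a..b} h"
proof -
  have "continuous_on {a..b} (\<lambda>x. \<gamma> / x * J x)"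
    using assms by (intro continuous_intros J_cont) auto
  then show ?thesis
    by (rule continuous_on_eq) (use assms h_eq in auto)
qed

lemma powr_aux: "0 < x \<Longrightarrow> \<gamma> / x * x powr (-\<gamma>) = \<gamma> * x powr (-\<gamma> - 1)"
  by (simp add: powr_diff powr_minus_divide)

lemma h_bounds:
  assumes "0 < x"
  shows "\<gamma> * x powr (-\<gamma> - 1) * H x \<le> h x"
    "h x \<le> \<gamma> * (1-\<alpha>) powr (-\<gamma>) * x powr (-\<gamma> - 1) * H x"
proof -
  have g: "0 \<le> \<gamma> / x" using assms gamma by simp
  have "\<gamma> * x powr (-\<gamma> - 1) * H x = \<gamma> / x * (x powr (-\<gamma>) * H x)"
    by (metis mult.assoc powr_aux[OF assms])
  also have "\<dots> \<le> \<gamma> / x * J x" using J_bounds(1)[OF assms] g by (rule mult_left_mono)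
  finally show "\<gamma> * x powr (-\<gamma> - 1) * H x \<le> h x" using h_eq[OF assms] by simp
  have "h x = \<gamma> / x * J x" using h_eq[OF assms] .
  also have "\<dots> \<le> \<gamma> / x * ((1-\<alpha>) powr (-\<gamma>) * x powr (-\<gamma>) * H x)"
    using J_bounds(2)[OF assms] g by (rule mult_left_mono)
  also have "\<dots> = \<gamma> * (1-\<alpha>) powr (-\<gamma>) * x powr (-\<gamma> - 1) * H x"
  proof -
    have "\<gamma> / x * ((1-\<alpha>) powr (-\<gamma>) * x powr (-\<gamma>) * H x)
          = (\<gamma> / x * x powr (-\<gamma>)) * (1-\<alpha>) powr (-\<gamma>) * H x" by (simp only: mult_ac)
    then show ?thesis using powr_aux[OF assms] by (simp only: mult_ac)
  qed
  finally show "h x \<le> \<gamma> * (1-\<alpha>) powr (-\<gamma>) * x powr (-\<gamma> - 1) * H x" .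
qed

lemma H_LBINT: "0 \<le> x \<Longrightarrow> H x = (LBINT u=ereal 0..ereal x. h u)"
  unfolding interval_lebesgue_integral_def set_lebesgue_integral_def H_def
  by (auto intro!: Bochner_Integration.integral_cong simp: h0_def indicator_def)

lemma H_deriv:
  assumes "0 < x"
  shows "(H has_real_derivative h x) (at x)"
proof -
  define a where "a = x / 2"
  have a: "0 < a" "a < x" using assms by (auto simp: a_def)
  have "((\<lambda>u. LBINT y=a..u. h y) has_vector_derivative h x) (at x within {a..2*x})"
    using a by (intro interval_integral_FTC2 h_cont) auto
  then have "((\<lambda>u. LBINT y=a..u. h y) has_vector_derivative h x) (at x within {a<..<2*x})"
    by (rule has_vector_derivative_within_subset) auto
  then have "((\<lambda>u. LBINT y=a..u. h y) has_vector_derivative h x) (at x)"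
    using a by (subst (asm) has_vector_derivative_within_open) auto
  then have d: "((\<lambda>u. H a + (LBINT y=a..u. h y)) has_real_derivative h x) (at x)"
    by (auto intro!: derivative_eq_intros simp: has_real_derivative_iff_has_vector_derivative)
  show ?thesis
  proof (rule has_field_derivative_transform_within_open[OF d, of "{a<..<2*x}"])
    fix u assume u: "u \<in> {a<..<2*x}"
    have int: "interval_lebesgue_integrable lborel (min (ereal 0) (min (ereal a) (ereal u)))
                 (max (ereal 0) (max (ereal a) (ereal u))) h"
    proof -
      have "min (ereal 0) (min (ereal a) (ereal u)) = ereal 0" "max (ereal 0) (max (ereal a) (ereal u)) = ereal u"
        using u a by auto
      moreover have "set_integrable lborel {0<..<u} h"
        by (rule set_integrable_subset[OF integrable]) auto
      ultimately show ?thesis using u a by (simp add: interval_lebesgue_integrable_def)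
    qed
    show "H a + (LBINT y=a..u. h y) = H u"
      using interval_integral_sum[OF int] H_LBINT[of a] H_LBINT[of u] u a by simp
  qed (use a in auto)
qed

lemma H_lim: "(\<lambda>n. H (real n)) \<longlonglongrightarrow> 1"
proof -
  have "integral\<^sup>L lborel h0 = 1"
    using normalised unfolding set_lebesgue_integral_def h0_def by simp
  moreover have "(\<lambda>n. H (real n)) \<longlonglongrightarrow> integral\<^sup>L lborel h0"
    unfolding H_def
  proof (rule integral_dominated_convergence[where w=h0])
    show "AE u in lborel. (\<lambda>n. indicator {0<..<real n} u * h0 u) \<longlonglongrightarrow> h0 u"
    proof (rule AE_I2)
      fix u
      show "(\<lambda>n. indicator {0<..<real n} u * h0 u) \<longlonglongrightarrow> h0 u"
      proof (cases "0 < u")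
        case True
        have "eventually (\<lambda>n. u < real n) sequentially"
          using filterlim_real_sequentially by (simp add: filterlim_at_top_dense)
        then have "eventually (\<lambda>n. h0 u = indicator {0<..<real n} u * h0 u) sequentially"
          by (rule eventually_mono) (use True in auto)
        then show ?thesis
          by (rule Lim_transform_eventually[OF tendsto_const])
      next
        case False
        then show ?thesis by (simp add: h0_def)
      qed
    qed
    fix n
    show "AE u in lborel. norm (indicator {0<..<real n} u * h0 u) \<le> h0 u"
      using h0_nonneg by (auto simp: indicator_def)
  qed (auto simp: h0_int)
  ultimately show ?thesis by simp
qed

lemma phi_deriv:
  assumes t: "0 < t"
  shows "((\<lambda>t. H t * exp (k * t powr (-\<gamma>))) has_real_derivative
           exp (k * t powr (-\<gamma>)) * (h t - k * \<gamma> * t powr (-\<gamma> - 1) * H t)) (at t)"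
proof -
  have p: "((\<lambda>t. t powr (-\<gamma>)) has_real_derivative (-\<gamma>) * t powr (-\<gamma> - 1)) (at t)"
    using has_real_derivative_powr[OF t, of "-\<gamma>"] by simp
  have e: "((\<lambda>t. exp (k * t powr (-\<gamma>))) has_real_derivative
              exp (k * t powr (-\<gamma>)) * (k * ((-\<gamma>) * t powr (-\<gamma> - 1)))) (at t)"
    by (rule DERIV_fun_exp[OF DERIV_cmult[OF p]])
  show ?thesis
    by (rule DERIV_cong[OF DERIV_mult[OF H_deriv[OF t] e]]) (simp add: algebra_simps)
qed

lemma phi_cont:
  assumes "0 < x"
  shows "continuous_on {x..y} (\<lambda>t. H t * exp (k * t powr (-\<gamma>)))"
  using assms by (intro continuous_at_imp_continuous_on ballI DERIV_isCont[OF phi_deriv]) auto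

lemma phi_lim: "(\<lambda>n. H (real n) * exp (k * real n powr (-\<gamma>))) \<longlonglongrightarrow> 1"
proof -
  have "(\<lambda>n. real n powr (-\<gamma>)) \<longlonglongrightarrow> 0"
    using gamma by (intro tendsto_neg_powr filterlim_real_sequentially) auto
  then have "(\<lambda>n. exp (k * real n powr (-\<gamma>))) \<longlonglongrightarrow> exp (k * 0)"
    by (intro tendsto_intros)
  from tendsto_mult[OF H_lim this] show ?thesis by simp
qed

lemma eventually_ge:
  "\<exists>N. \<forall>n\<ge>N. x \<le> real n"
  by (metis le_nat_iff nat_le_real_less ceiling_le_iff less_eq_real_def of_int_of_nat_eq order.refl ceiling_correct
      le_of_int_ceiling order_trans of_nat_mono real_nat_ceiling_ge)

lemma H_upper:
  assumes x: "0 < x"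
  shows "H x * exp (x powr (-\<gamma>)) \<le> 1"
proof (rule LIMSEQ_le_const[OF phi_lim[of 1]])
  obtain N where N: "\<forall>n\<ge>N. x \<le> real n" using eventually_ge by blast
  show "\<exists>N. \<forall>n\<ge>N. H x * exp (x powr (-\<gamma>)) \<le> H (real n) * exp (1 * real n powr (-\<gamma>))"
  proof (intro exI allI impI)
    fix n assume "N \<le> n"
    then have xn: "x \<le> real n" using N by auto
    have "H x * exp (1 * x powr (-\<gamma>)) \<le> H (real n) * exp (1 * real n powr (-\<gamma>))"
    proof (rule DERIV_nonneg_imp_increasing_open[OF xn _ phi_cont[OF x]])
      fix t assume t: "x < t" "t < real n"
      then have "0 < t" using x by simp
      have "0 \<le> exp (1 * t powr (-\<gamma>)) * (h t - 1 * \<gamma> * t powr (-\<gamma> - 1) * H t)"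
        using h_bounds(1)[OF \<open>0 < t\<close>] by simp
      then show "\<exists>y. ((\<lambda>t. H t * exp (1 * t powr (-\<gamma>))) has_real_derivative y) (at t) \<and> 0 \<le> y"
        using phi_deriv[OF \<open>0 < t\<close>, of 1] by blast
    qed
    then show "H x * exp (x powr (-\<gamma>)) \<le> H (real n) * exp (1 * real n powr (-\<gamma>))" by simp
  qed
qed

lemma H_lower:
  assumes x: "0 < x"
  shows "1 \<le> H x * exp ((1-\<alpha>) powr (-\<gamma>) * x powr (-\<gamma>))"
proof (rule LIMSEQ_le_const2[OF phi_lim[of "(1-\<alpha>) powr (-\<gamma>)"]])
  obtain N where N: "\<forall>n\<ge>N. x \<le> real n" using eventually_ge by blast
  show "\<exists>N. \<forall>n\<ge>N. H (real n) * exp ((1-\<alpha>) powr (-\<gamma>) * real n powr (-\<gamma>)) \<le> H x * exp ((1-\<alpha>) powr (-\<gamma>) * x powr (-\<gamma>))"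
  proof (intro exI allI impI)
    fix n assume "N \<le> n"
    then have xn: "x \<le> real n" using N by auto
    show "H (real n) * exp ((1-\<alpha>) powr (-\<gamma>) * real n powr (-\<gamma>)) \<le> H x * exp ((1-\<alpha>) powr (-\<gamma>) * x powr (-\<gamma>))"
    proof (rule DERIV_nonpos_imp_decreasing_open[OF xn _ phi_cont[OF x]])
      fix t assume t: "x < t" "t < real n"
      then have "0 < t" using x by simp
      have "exp ((1-\<alpha>) powr (-\<gamma>) * t powr (-\<gamma>)) * (h t - (1-\<alpha>) powr (-\<gamma>) * \<gamma> * t powr (-\<gamma> - 1) * H t) \<le> 0"
        using h_bounds(2)[OF \<open>0 < t\<close>] by (intro mult_nonneg_nonpos) (auto simp: mult_ac)
      then show "\<exists>y. ((\<lambda>t. H t * exp ((1-\<alpha>) powr (-\<gamma>) * t powr (-\<gamma>))) has_real_derivative y) (at t) \<and> y \<le> 0"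
        using phi_deriv[OF \<open>0 < t\<close>, of "(1-\<alpha>) powr (-\<gamma>)"] by blast
    qed
  qed
qed

lemma final:
  assumes x: "0 < x"
  shows "0 < h x \<and>
     \<gamma> * x powr (-\<gamma> - 1) * exp (- ((1 - \<alpha>) powr (-\<gamma>) * x powr (-\<gamma>))) \<le> h x \<and>
     h x \<le> \<gamma> * (1 - \<alpha>) powr (-\<gamma>) * x powr (-\<gamma> - 1) * exp (- (x powr (-\<gamma>)))"
proof -
  define c where "c = (1 - \<alpha>) powr (-\<gamma>)"
  have c: "0 \<le> c" unfolding c_def by simp
  have "exp (- (c * x powr (-\<gamma>))) \<le> H x"
    using H_lower[OF x] by (simp add: c_def exp_minus field_simps)
  moreover have "H x \<le> exp (- (x powr (-\<gamma>)))"
    using H_upper[OF x] by (simp add: exp_minus field_simps)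
  moreover have k: "0 \<le> \<gamma> * x powr (-\<gamma> - 1)" using gamma by simp
  ultimately have l: "\<gamma> * x powr (-\<gamma> - 1) * exp (- (c * x powr (-\<gamma>))) \<le> \<gamma> * x powr (-\<gamma> - 1) * H x"
    and u: "\<gamma> * c * x powr (-\<gamma> - 1) * H x \<le> \<gamma> * c * x powr (-\<gamma> - 1) * exp (- (x powr (-\<gamma>)))"
    using c gamma by (auto intro!: mult_left_mono)
  have pos: "0 < \<gamma> * x powr (-\<gamma> - 1) * exp (- (c * x powr (-\<gamma>)))"
    using gamma x by simp
  show ?thesis
    using l u pos h_bounds[OF x] unfolding c_def by linarith
qed

end
theorem mainTheorem3:
  fixes h :: "real \<Rightarrow> real" and \<alpha> \<gamma> :: real
  assumes alpha: "0 < \<alpha>" "\<alpha> < 1"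
    and gamma: "0 < \<gamma>"
    and nonneg: "\<And>x. 0 < x \<Longrightarrow> 0 \<le> h x"
    and integrable: "set_integrable lborel {0<..} h"
    and normalised: "(LINT x:{0<..}|lborel. h x) = 1"
    and eqn: "\<And>x. 0 < x \<Longrightarrow>
       h x = \<gamma> / x * (LINT u:{0<..<x}|lborel. h u / (x - \<alpha> * u) powr \<gamma>)"
  shows "\<forall>x>0. 0 < h x \<and>
     \<gamma> * x powr (-\<gamma> - 1) * exp (- ((1 - \<alpha>) powr (-\<gamma>) * x powr (-\<gamma>))) \<le> h x \<and>
     h x \<le> \<gamma> * (1 - \<alpha>) powr (-\<gamma>) * x powr (-\<gamma> - 1) * exp (- (x powr (-\<gamma>)))"
proof -
  interpret Hloc h \<alpha> \<gamma>
    using assms by unfold_locales auto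
  show ?thesis using final by blast
qed

end
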